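(* Assume the setting of the context, fix $\Delta=(h,\Delta x)$, and fix a policy $\mathsf{c}=(\mathsf{c}_{i,j})$ with $\mathsf{c}_{i,j}\in\mathcal{C}^\Delta_j(x_i)$ for all $i\in\mathbb{N}$, $j=1,2$. If $\mathbf{U},\mathbf{V}\in B(\mathcal{A}^{\Delta x})^2$ satisfy $$F^\Delta_j\big(x_i,\mathsf{c}_{i,j},(U_{i,j},U_{i,\bar\jmath}),U_{\cdot,j}\big)\le0\quad\text{and}\quad F^\Delta_j\big(x_i,\mathsf{c}_{i,j},(V_{i,j},V_{i,\bar\jmath}),V_{\cdot,j}\big)\ge0\qquad\forall i\in\mathbb{N},\ j=1,2,$$ then $U_{i,j}\le V_{i,j}$ for all $i,j$.
   Context: Constants: $\rho>0$, $r<\rho$, $0<y_1<y_2$, $\gamma>1$, $\underline{x}\le0$ with $\rho\underline{x}+y_j>0$, $\lambda_1,\lambda_2\ge0$; $\bar\jmath=3-j$; $u(c)=\frac{c^{1-\gamma}}{1-\gamma}$ for $c>0$, $u(0)=-\infty$. Discretization $\Delta=(h,\Delta x)$, $h,\Delta x>0$, $\rho h<1$, $\lambda_jh<1$. Grid $x_i=\underline{x}+i\Delta x$, $i\in\mathbb{N}=\{0,1,\dots\}$; $B(\mathcal{A}^{\Delta x})$ = bounded real sequences indexed by $\mathbb{N}$. $\beta_k(x)=\max\{0,1-|x-x_k|/\Delta x\}$ for $x\ge\underline{x}$. $\mathcal{C}^\Delta_j(x_i)=\{c\ge0:x_i+h(rx_i+y_j-c)\ge\underline{x}\}$, $s_{i,j}(c)=rx_i+y_j-c$.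 Linearized scheme, for fixed $c\ge0$: $$F^\Delta_j(x_i,c,(\mathsf{q}_j,\mathsf{q}_{\bar\jmath}),\mathsf{U})=\rho\mathsf{q}_j-(1-\rho h)\lambda_j(\mathsf{q}_{\bar\jmath}-\mathsf{q}_j)-\Big(u(c)+\frac{(1-\rho h)(1-\lambda_jh)}{h}\Big(\sum_k\beta_k(x_i+hs_{i,j}(c))\mathsf{U}_k-\mathsf{q}_j\Big)\Big).$$ *)

theory Defs
  imports "HOL-Analysis.Analysis"
begin

definition util :: "real \<Rightarrow> real \<Rightarrow> ereal" where
  "util gam c = (if c > 0 then ereal (c powr (1 - gam) / (1 - gam)) else -\<infinity>)"

definition grid :: "real \<Rightarrow> real \<Rightarrow> nat \<Rightarrow> real" where
  "grid xlow dx i = xlow + real i * dx"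

definition hatb :: "real \<Rightarrow> real \<Rightarrow> nat \<Rightarrow> real \<Rightarrow> real" where
  "hatb xlow dx k x = max 0 (1 - \<bar>x - grid xlow dx k\<bar> / dx)"

text \<open>Admissible controls C_j(x_i) (j is given through the income y_j).\<close>
definition admissible :: "real \<Rightarrow> real \<Rightarrow> real \<Rightarrow> real \<Rightarrow> real \<Rightarrow> nat \<Rightarrow> real set" where
  "admissible r xlow dx h yj i =
     {c. c \<ge> 0 \<and> grid xlow dx i + h * (r * grid xlow dx i + yj - c) \<ge> xlow}"

definition Fscheme ::
  "real \<Rightarrow> real \<Rightarrow> real \<Rightarrow> real \<Rightarrow> real \<Rightarrow> real \<Rightarrow> real \<Rightarrow> real \<Rightarrow>
   nat \<Rightarrow> real \<Rightarrow> real \<Rightarrow> real \<Rightarrow> (nat \<Rightarrow> real) \<Rightarrow> ereal" where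
  "Fscheme rho r gam xlow h dx yj lamj i c qj qjb U =
     ereal (rho * qj - (1 - rho * h) * lamj * (qjb - qj))
     - (util gam c + ereal ((1 - rho * h) * (1 - lamj * h) / h *
         ((\<Sum>k. hatb xlow dx k (grid xlow dx i + h * (r * grid xlow dx i + yj - c)) * U k) - qj)))"

end

theory Submission
  imports Defs
begin

lemma hat_sum:
  fixes xlow dx z :: real
  assumes dx: "dx > 0" and z: "z \<ge> xlow"
  defines "n \<equiv> nat \<lfloor>(z - xlow) / dx\<rfloor>"
  shows "(\<Sum>k. hatb xlow dx k z * f k) = hatb xlow dx n z * f n + hatb xlow dx (Suc n) z * f (Suc n)"
    and "hatb xlow dx n z + hatb xlow dx (Suc n) z = 1"
    and "hatb xlow dx k z \<ge> 0"
proof -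
  define t where "t = (z - xlow) / dx"
  have t0: "t \<ge> 0" using dx z by (simp add: t_def)
  have nt: "real n \<le> t" "t < real n + 1" unfolding n_def t_def[symmetric] using t0
    by (simp_all add: of_nat_nat)
  have hb: "hatb xlow dx k z = max 0 (1 - \<bar>t - real k\<bar>)" for k
  proof -
    have "\<bar>z - grid xlow dx k\<bar> / dx = \<bar>(z - grid xlow dx k) / dx\<bar>" using dx by simp
    also have "(z - grid xlow dx k) / dx = t - real k" using dx
      by (simp add: grid_def t_def field_simps)
    finally show ?thesis by (simp add: hatb_def)
  qed
  have zero: "hatb xlow dx k z = 0" if "k \<notin> {n, Suc n}" for k
  proof -
    have "real k \<le> real n - 1 \<or> real k \<ge> real n + 2" using that by auto
    then show ?thesis unfolding hb using nt by auto
  qed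
  have "(\<Sum>k. hatb xlow dx k z * f k) = (\<Sum>k\<in>{n, Suc n}. hatb xlow dx k z * f k)"
    by (rule suminf_finite) (auto simp: zero)
  then show "(\<Sum>k. hatb xlow dx k z * f k) = hatb xlow dx n z * f n + hatb xlow dx (Suc n) z * f (Suc n)"
    by simp
  show "hatb xlow dx n z + hatb xlow dx (Suc n) z = 1" unfolding hb using nt by auto
  show "hatb xlow dx k z \<ge> 0" by (simp add: hatb_def)
qed

lemma F_real:
  assumes "c > 0"
  shows "Fscheme rho r gam xlow h dx yj lamj i c qj qjb U =
     ereal (rho * qj - (1 - rho * h) * lamj * (qjb - qj)
     - (c powr (1 - gam) / (1 - gam) + ((1 - rho * h) * (1 - lamj * h) / h *
         ((\<Sum>k. hatb xlow dx k (grid xlow dx i + h * (r * grid xlow dx i + yj - c)) * U k) - qj))))"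
  using assms by (simp add: Fscheme_def util_def)

lemma F_zero:
  assumes "\<not> c > 0"
  shows "Fscheme rho r gam xlow h dx yj lamj i c qj qjb U = \<infinity>"
  using assms by (simp add: Fscheme_def util_def)

theorem mainTheorem12:
  fixes rho r gam xlow h dx :: real
    and y lam :: "nat \<Rightarrow> real"
    and cp :: "nat \<Rightarrow> nat \<Rightarrow> real"
    and U V :: "nat \<Rightarrow> nat \<Rightarrow> real"
  assumes "rho > 0" and "r < rho" and "0 < y 1" and "y 1 < y 2" and "gam > 1"
    and "xlow \<le> 0" and "\<And>j. j \<in> {1, 2} \<Longrightarrow> rho * xlow + y j > 0"
    and "\<And>j. j \<in> {1, 2} \<Longrightarrow> lam j \<ge> 0"
    and "h > 0" and "dx > 0" and "rho * h < 1"
    and "\<And>j. j \<in> {1, 2} \<Longrightarrow> lam j * h < 1"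
    and "\<And>i j. j \<in> {1, 2} \<Longrightarrow> cp i j \<in> admissible r xlow dx h (y j) i"
    and "\<exists>M. \<forall>i. \<forall>j\<in>{1, 2}. \<bar>U i j\<bar> \<le> M"
    and "\<exists>M. \<forall>i. \<forall>j\<in>{1, 2}. \<bar>V i j\<bar> \<le> M"
    and "\<And>i j. j \<in> {1, 2} \<Longrightarrow>
           Fscheme rho r gam xlow h dx (y j) (lam j) i (cp i j) (U i j) (U i (3 - j)) (\<lambda>k. U k j) \<le> 0"
    and "\<And>i j. j \<in> {1, 2} \<Longrightarrow>
           Fscheme rho r gam xlow h dx (y j) (lam j) i (cp i j) (V i j) (V i (3 - j)) (\<lambda>k. V k j) \<ge> 0"
  shows "\<forall>i. \<forall>j\<in>{1, 2}. U i j \<le> V i j"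
proof -
  note A = assms
  obtain MU where MU: "\<And>i j. j \<in> {1,2} \<Longrightarrow> \<bar>U i j\<bar> \<le> MU" using A(14) by blast
  obtain MV where MV: "\<And>i j. j \<in> {1,2} \<Longrightarrow> \<bar>V i j\<bar> \<le> MV" using A(15) by blast
  define S where "S = {U i j - V i j | i j. j \<in> {1::nat,2}}"
  have bdd: "bdd_above S" unfolding S_def bdd_above_def
  proof (rule exI[of _ "MU + MV"], intro ballI)
    fix x assume "x \<in> {U i j - V i j |i j. j \<in> {1::nat, 2}}"
    then obtain i j where x: "x = U i j - V i j" and j: "j \<in> {1,2}" by blast
    from MU[OF j, of i] MV[OF j, of i] show "x \<le> MU + MV" unfolding x by (simp add: abs_le_iff)
  qed
  have ne: "S \<noteq> {}" unfolding S_def by auto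
  define M where "M = Sup S"
  have le: "U i j - V i j \<le> M" if "j \<in> {1,2}" for i j
    unfolding M_def by (rule cSup_upper[OF _ bdd]) (use that in \<open>auto simp: S_def\<close>)
  define b where "b j = (1 - rho * h) * lam j + (1 - rho * h) * (1 - lam j * h) / h" for j
  define B where "B = max (b 1) (b 2)"
  have b0: "b j \<ge> 0" if "j \<in> {1,2}" for j
    using A(8)[OF that] A(12)[OF that] A(9) A(11) unfolding b_def
    by (intro add_nonneg_nonneg mult_nonneg_nonneg divide_nonneg_pos) auto
  have bB: "b j \<le> B" if "j \<in> {1,2}" for j using that by (auto simp: B_def)
  have B0: "B \<ge> 0" using b0[of 1] bB[of 1] by auto
  show ?thesis
  proof (rule ccontr)
    assume "\<not> ?thesis"
    then obtain i0 j0 where "j0 \<in> {1,2}" "U i0 j0 > V i0 j0" using not_le by blast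
    with le[of j0 i0] have Mpos: "M > 0" by auto
    have key: "U i j - V i j \<le> M - rho * M / (rho + B)" if j: "j \<in> {1,2}" for i j
    proof -
      define z where "z = grid xlow dx i + h * (r * grid xlow dx i + y j - cp i j)"
      have zx: "z \<ge> xlow" using A(13)[OF j, of i] by (simp add: admissible_def z_def)
      have cpos: "cp i j > 0"
      proof (rule ccontr)
        assume "\<not> cp i j > 0"
        from A(16)[OF j, of i] F_zero[OF this] show False by simp
      qed
      define n where "n = nat \<lfloor>(z - xlow) / dx\<rfloor>"
      note hs = hat_sum[OF A(10) zx]
      define p where "p = hatb xlow dx n z"
      define q where "q = hatb xlow dx (Suc n) z"
      have SU: "(\<Sum>k. hatb xlow dx k z * U k j) = p * U n j + q * U (Suc n) j"
        using hs(1)[of "\<lambda>k. U k j"] by (simp add: p_def q_def n_def)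
      have SV: "(\<Sum>k. hatb xlow dx k z * V k j) = p * V n j + q * V (Suc n) j"
        using hs(1)[of "\<lambda>k. V k j"] by (simp add: p_def q_def n_def)
      have pq: "p + q = 1" "p \<ge> 0" "q \<ge> 0" using hs(2,3) by (simp_all add: p_def q_def n_def)
      define a where "a = (1 - rho * h) * (1 - lam j * h) / h"
      define l where "l = (1 - rho * h) * lam j"
      define uu where "uu = cp i j powr (1 - gam) / (1 - gam)"
      have EU: "rho * U i j - l * (U i (3-j) - U i j) - (uu + a * ((p * U n j + q * U (Suc n) j) - U i j)) \<le> 0"
        using A(16)[OF j, of i] unfolding F_real[OF cpos] z_def[symmetric] SU
        by (simp add: a_def l_def uu_def algebra_simps)
      have EV: "rho * V i j - l * (V i (3-j) - V i j) - (uu + a * ((p * V n j + q * V (Suc n) j) - V i j)) \<ge> 0"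
        using A(17)[OF j, of i] unfolding F_real[OF cpos] z_def[symmetric] SV
        by (simp add: a_def l_def uu_def algebra_simps)
      have j3: "3 - j \<in> {1,2}" using j by auto
      have w1: "U i (3-j) - V i (3-j) \<le> M" by (rule le[OF j3])
      have w2: "U n j - V n j \<le> M" "U (Suc n) j - V (Suc n) j \<le> M" using le[OF j] by auto
      have l0: "l \<ge> 0" using A(8)[OF j] A(11) by (simp add: l_def)
      have a0: "a \<ge> 0" using A(12)[OF j] A(11) A(9) by (simp add: a_def)
      have bj: "b j = l + a" by (simp add: b_def l_def a_def)
      have sw: "p * (U n j - V n j) + q * (U (Suc n) j - V (Suc n) j) \<le> M"
      proof -
        have "p * (U n j - V n j) + q * (U (Suc n) j - V (Suc n) j) \<le> p * M + q * M"
          using pq w2 by (intro add_mono mult_left_mono) auto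
        moreover have "p * M + q * M = (p + q) * M" by (simp add: distrib_right)
        ultimately show ?thesis using pq(1) by simp
      qed
      define w where "w = U i j - V i j"
      have "(rho + l + a) * w \<le> l * (U i (3-j) - V i (3-j)) + a * (p * (U n j - V n j) + q * (U (Suc n) j - V (Suc n) j))"
      proof -
        have "(rho + l + a) * w - (l * (U i (3-j) - V i (3-j)) + a * (p * (U n j - V n j) + q * (U (Suc n) j - V (Suc n) j)))
          = (rho * U i j - l * (U i (3-j) - U i j) - (uu + a * ((p * U n j + q * U (Suc n) j) - U i j)))
          - (rho * V i j - l * (V i (3-j) - V i j) - (uu + a * ((p * V n j + q * V (Suc n) j) - V i j)))"
          unfolding w_def by (simp add: algebra_simps)
        then show ?thesis using EU EV by linarith
      qed
      also have "\<dots> \<le> l * M + a * M"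
        using w1 sw l0 a0 by (intro add_mono mult_left_mono) auto
      finally have ineq: "(rho + b j) * w \<le> b j * M" by (simp add: bj algebra_simps)
      have rb: "rho + b j > 0" using A(1) b0[OF j] by simp
      have "w \<le> b j * M / (rho + b j)" using ineq rb by (simp add: field_simps)
      also have "b j * M / (rho + b j) = M - rho * M / (rho + b j)" using rb by (simp add: field_simps)
      also have "\<dots> \<le> M - rho * M / (rho + B)"
      proof -
        have "rho * M / (rho + B) \<le> rho * M / (rho + b j)"
          using rb bB[OF j] A(1) Mpos by (intro divide_left_mono) auto
        then show ?thesis by simp
      qed
      finally show ?thesis by (simp add: w_def)
    qed
    have "M \<le> M - rho * M / (rho + B)"
      unfolding M_def
    proof (rule cSup_least[OF ne])
      fix x assume "x \<in> S"
      then obtain i j where x: "x = U i j - V i j" and j: "j \<in> {1,2}" unfolding S_def by blast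
      show "x \<le> Sup S - rho * Sup S / (rho + B)" using key[OF j, of i] unfolding x M_def .
    qed
    moreover have "rho * M / (rho + B) > 0" using A(1) Mpos B0 by simp
    ultimately show False by simp
  qed
qed

end
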